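(* Let $n\geq 2$ and number the crossings of the $n$-twist loop $1,\dots,n$ in any fixed order. The set of words of the states of the $n$-twist loop consisting of exactly two closed curves is \[ \mathcal{T}_n=\left\{1^k01^{n-k-1}\;\middle|\; 0\leq k\leq n-1\right\}. \]
   Context: A (shadow) diagram is a finite collection of closed curves in the plane in general position whose only singularities are finitely many transverse double points, called crossings; over/under information is ignored. At a crossing four corners of complementary regions meet, forming two pairs of opposite corners. Splitting a crossing replaces a small neighbourhood of it by two disjoint arcs in one of two ways, each merging one pair of opposite corners into a channel. A state is the result of choosing a split at every crossing; it is a disjoint union of simple closed curves. The $n$-twist loop: take a horizontal row of $n$ crossings formed by two strands twisting around each other (consecutive crossings bound a bigon), and join the two left endpoints to each other by an arc and the two right endpoints to each other by an arc, creating no new crossings. At every crossing, the upper and lower corners belong to the unbounded region. The $A$-split at a crossing is the split merging its upper and lower corners (opening the channel through the unbounded region); the $B$-split merges its left and right corners. With crossings numbered $1,\dots,n$, a state is recorded by the binary word whose $i$-th letter is $0$ if an $A$-split is applied at crossing $i$ and $1$ if a $B$-split is applied. Notation: $\sigma^k$ denotes $k$ consecutive copies of the letter $\sigma$ (empty if $k\leq 0$), words are concatenated. *)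

theory Defs
  imports "HOL-Combinatorics.Permutations"
begin

text \<open>Crossings sit at positions 1..n
from left to right along the row. Each crossing has four arc endpoints
(north-west, north-east, south-west, south-east). The diagram arcs join
NE of position j to NW of position j+1 and SE of position j to SW of position j+1
(these two arcs bound the bigon between consecutive crossings), the left arc joins
NW and SW of position 1, the right arc joins NE and SE of position n.
The A-split (letter 0) merges the upper and lower corners, i.e. replaces the
crossing by the arcs NW--SW and NE--SE; the B-split (letter 1) merges the left and
right corners, i.e. uses the arcs NW--NE and SW--SE.
A state is a disjoint union of simple closed curves; these are the connected
components of the resulting 2-regular graph on the endpoints.\<close>

datatype corner = NW | NE | SW | SE

definition twist_vertices :: "nat \<Rightarrow> (nat \<times> corner) set" where
  "twist_vertices n = {1..n} \<times> UNIV"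

definition twist_state_arcs :: "nat \<Rightarrow> (nat \<Rightarrow> nat) \<Rightarrow> ((nat \<times> corner) \<times> (nat \<times> corner)) set" where
  "twist_state_arcs n s =
     {((j, NE), (Suc j, NW)) | j. 1 \<le> j \<and> j < n}
   \<union> {((j, SE), (Suc j, SW)) | j. 1 \<le> j \<and> j < n}
   \<union> {((1, NW), (1, SW)), ((n, NE), (n, SE))}
   \<union> {((j, NW), (j, SW)) | j. j \<in> {1..n} \<and> s j = 0}
   \<union> {((j, NE), (j, SE)) | j. j \<in> {1..n} \<and> s j = 0}
   \<union> {((j, NW), (j, NE)) | j. j \<in> {1..n} \<and> s j = 1}
   \<union> {((j, SW), (j, SE)) | j. j \<in> {1..n} \<and> s j = 1}"

definition num_curves :: "nat \<Rightarrow> (nat \<Rightarrow> nat) \<Rightarrow> nat" where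
  "num_curves n s =
     (let E = twist_state_arcs n s in
      card {((E \<union> E\<inverse>)\<^sup>*) `` {v} | v. v \<in> twist_vertices n})"

text \<open>The crossings carry labels 1..n given by a numbering p (a permutation of
{1..n}): the crossing at position j has number p j. A word w (a list over {0,1}
of length n) has i-th letter (index i-1) for crossing number i.\<close>
definition word_state :: "(nat \<Rightarrow> nat) \<Rightarrow> nat list \<Rightarrow> nat \<Rightarrow> nat" where
  "word_state p w j = w ! (p j - 1)"

definition T_set :: "nat \<Rightarrow> nat list set" where
  "T_set n = {replicate k 1 @ [0] @ replicate (n - k - 1) 1 | k. k \<le> n - 1}"

end

theory Submission
  imports Defs
begin


definition cnt :: "nat \<Rightarrow> (nat \<Rightarrow> nat) \<Rightarrow> nat \<Rightarrow> nat" where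
  "cnt n s t = card {i \<in> {1..n}. i \<le> t \<and> s i = 0}"

definition lab :: "nat \<Rightarrow> (nat \<Rightarrow> nat) \<Rightarrow> nat \<times> corner \<Rightarrow> nat" where
  "lab n s v = (case snd v of NW \<Rightarrow> cnt n s (fst v - 1) | SW \<Rightarrow> cnt n s (fst v - 1)
      | NE \<Rightarrow> cnt n s (fst v) | SE \<Rightarrow> cnt n s (fst v))"

definition ytop :: "nat \<Rightarrow> nat \<times> corner" where
  "ytop t = (if t = 0 then (1, NW) else (t, NE))"

lemma cnt_0: "cnt n s 0 = 0"
  unfolding cnt_def by (auto intro!: arg_cong[where f=card])

lemma cnt_Suc: "Suc t \<le> n \<Longrightarrow> cnt n s (Suc t) = cnt n s t + (if s (Suc t) = 0 then 1 else 0)"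
proof -
  assume a: "Suc t \<le> n"
  have fin: "finite {i \<in> {1..n}. i \<le> t \<and> s i = 0}" by auto
  show ?thesis
  proof (cases "s (Suc t) = 0")
    case True
    have "{i \<in> {1..n}. i \<le> Suc t \<and> s i = 0} = insert (Suc t) {i \<in> {1..n}. i \<le> t \<and> s i = 0}"
      using a True by auto
    then show ?thesis using True fin unfolding cnt_def by simp
  next
    case False
    have "{i \<in> {1..n}. i \<le> Suc t \<and> s i = 0} = {i \<in> {1..n}. i \<le> t \<and> s i = 0}"
      using a False le_Suc_eq by auto
    then show ?thesis using False unfolding cnt_def by simp
  qed
qed

lemma cnt_mono: "a \<le> b \<Longrightarrow> cnt n s a \<le> cnt n s b"
  unfolding cnt_def by (rule card_mono) auto

lemma cnt_le: "cnt n s t \<le> cnt n s n"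
  unfolding cnt_def by (rule card_mono) auto

lemma cnt_ivt: "m \<le> n \<Longrightarrow> {0..cnt n s m} \<subseteq> cnt n s ` {0..m}"
proof (induction m)
  case 0 then show ?case by (simp add: cnt_0)
next
  case (Suc m)
  then have IH: "{0..cnt n s m} \<subseteq> cnt n s ` {0..m}" by simp
  have "cnt n s (Suc m) \<le> cnt n s m + 1" using cnt_Suc[OF Suc.prems, of s] by simp
  then have "{0..cnt n s (Suc m)} \<subseteq> insert (cnt n s (Suc m)) {0..cnt n s m}" by auto
  also have "\<dots> \<subseteq> cnt n s ` {0..Suc m}" using IH by auto
  finally show ?case .
qed

context
  fixes n :: nat and s :: "nat \<Rightarrow> nat"
  assumes n1: "n \<ge> 1" and s01: "\<forall>j\<in>{1..n}. s j = 0 \<or> s j = 1"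
begin

abbreviation "EE \<equiv> twist_state_arcs n s"
abbreviation "RR \<equiv> (EE \<union> EE\<inverse>)\<^sup>*"

lemma edge: "(u, v) \<in> EE \<Longrightarrow> (u, v) \<in> RR \<and> (v, u) \<in> RR"
  by auto

lemma RR_sym: "(u, v) \<in> RR \<Longrightarrow> (v, u) \<in> RR"
  using sym_rtrancl[OF sym_Un_converse[of EE]] by (meson symD)

lemma lab_edge: "(u, v) \<in> EE \<Longrightarrow> lab n s u = lab n s v"
proof -
  assume "(u, v) \<in> EE"
  then show ?thesis unfolding twist_state_arcs_def
  proof (elim UnE insertE CollectE exE conjE emptyE)
    fix j assume "(u, v) = ((j, NW), j, NE)" "j \<in> {1..n}" "s j = 1"
    then show ?thesis using cnt_Suc[of "j - 1" n s] by (auto simp: lab_def)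
  next
    fix j assume "(u, v) = ((j, SW), j, SE)" "j \<in> {1..n}" "s j = 1"
    then show ?thesis using cnt_Suc[of "j - 1" n s] by (auto simp: lab_def)
  qed (auto simp: lab_def)
qed

lemma lab_RR: "(u, v) \<in> RR \<Longrightarrow> lab n s u = lab n s v"
proof (induction rule: rtrancl_induct)
  case base then show ?case by simp
next
  case (step y z) then show ?case by (metis UnE converseD lab_edge)
qed

lemma e_bigonT: "1 \<le> j \<Longrightarrow> j < n \<Longrightarrow> ((j, NE), (Suc j, NW)) \<in> RR"
  unfolding twist_state_arcs_def by (intro r_into_rtrancl) auto
lemma e_bigonB: "1 \<le> j \<Longrightarrow> j < n \<Longrightarrow> ((j, SE), (Suc j, SW)) \<in> RR"
  unfolding twist_state_arcs_def by (intro r_into_rtrancl) auto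
lemma e_left: "((1, NW), (1, SW)) \<in> RR"
  unfolding twist_state_arcs_def by (intro r_into_rtrancl) auto
lemma e_A1: "j \<in> {1..n} \<Longrightarrow> s j = 0 \<Longrightarrow> ((j, NW), (j, SW)) \<in> RR"
  unfolding twist_state_arcs_def by (intro r_into_rtrancl) auto
lemma e_A2: "j \<in> {1..n} \<Longrightarrow> s j = 0 \<Longrightarrow> ((j, NE), (j, SE)) \<in> RR"
  unfolding twist_state_arcs_def by (intro r_into_rtrancl) auto
lemma e_B1: "j \<in> {1..n} \<Longrightarrow> s j = 1 \<Longrightarrow> ((j, NW), (j, NE)) \<in> RR"
  unfolding twist_state_arcs_def by (intro r_into_rtrancl) auto
lemma e_B2: "j \<in> {1..n} \<Longrightarrow> s j = 1 \<Longrightarrow> ((j, SW), (j, SE)) \<in> RR"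
  unfolding twist_state_arcs_def by (intro r_into_rtrancl) auto

lemma NW_SW: "1 \<le> j \<Longrightarrow> j \<le> n \<Longrightarrow> ((j, NW), (j, SW)) \<in> RR"
proof (induction j rule: nat_induct_at_least)
  case base then show ?case using e_left by simp
next
  case (Suc j)
  have ih: "((j, NW), (j, SW)) \<in> RR" using Suc by simp
  have ne: "((j, NE), (j, SE)) \<in> RR"
  proof (cases "s j = 0")
    case True then show ?thesis using e_A2 Suc by auto
  next
    case False
    have "j \<in> {1..n}" using Suc by auto
    then have "s j = 1" using s01 False by metis
    then have "((j, NE), (j, NW)) \<in> RR" "((j, SW), (j, SE)) \<in> RR"
      using e_B1 e_B2 RR_sym Suc by auto
    then show ?thesis using ih by (meson rtrancl_trans)
  qed
  have "((Suc j, NW), (j, NE)) \<in> RR" "((j, SE), (Suc j, SW)) \<in> RR"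
    using e_bigonT e_bigonB RR_sym Suc by auto
  then show ?case using ne by (meson rtrancl_trans)
qed

lemma NE_SE: "1 \<le> j \<Longrightarrow> j \<le> n \<Longrightarrow> ((j, NE), (j, SE)) \<in> RR"
proof -
  assume j: "1 \<le> j" "j \<le> n"
  show ?thesis
  proof (cases "s j = 0")
    case True then show ?thesis using e_A2 j by auto
  next
    case False
    have "j \<in> {1..n}" using j by auto
    then have "s j = 1" using s01 False by metis
    then have "((j, NE), (j, NW)) \<in> RR" "((j, SW), (j, SE)) \<in> RR"
      using e_B1 e_B2 RR_sym j by auto
    then show ?thesis using NW_SW j by (meson rtrancl_trans)
  qed
qed

lemma NW_ytop: "1 \<le> j \<Longrightarrow> j \<le> n \<Longrightarrow> ((j, NW), ytop (j - 1)) \<in> RR"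
proof -
  assume j: "1 \<le> j" "j \<le> n"
  show ?thesis
  proof (cases "j = 1")
    case True then show ?thesis by (simp add: ytop_def)
  next
    case False
    then obtain k where k: "j = Suc k" "1 \<le> k" using j by (cases j) auto
    then have "((Suc k, NW), (k, NE)) \<in> RR" using e_bigonT RR_sym j by auto
    then show ?thesis using k by (simp add: ytop_def)
  qed
qed

lemma ytop_step: "Suc t \<le> n \<Longrightarrow> s (Suc t) = 1 \<Longrightarrow> (ytop t, ytop (Suc t)) \<in> RR"
proof -
  assume a: "Suc t \<le> n" "s (Suc t) = 1"
  have 1: "(ytop t, (Suc t, NW)) \<in> RR" using NW_ytop[of "Suc t"] a RR_sym by auto
  have 2: "((Suc t, NW), (Suc t, NE)) \<in> RR" using e_B1 a by auto
  have "ytop (Suc t) = (Suc t, NE)" by (simp add: ytop_def)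
  then show ?thesis using 1 2 by (metis rtrancl_trans)
qed

lemma ytop_conn_aux: "\<forall>a. a \<le> b \<longrightarrow> b \<le> n \<longrightarrow> cnt n s a = cnt n s b \<longrightarrow> (ytop a, ytop b) \<in> RR"
proof (induction b)
  case 0 then show ?case by simp
next
  case (Suc b)
  show ?case
  proof (intro allI impI)
    fix a assume h: "a \<le> Suc b" "Suc b \<le> n" "cnt n s a = cnt n s (Suc b)"
    show "(ytop a, ytop (Suc b)) \<in> RR"
    proof (cases "a = Suc b")
      case True then show ?thesis by simp
    next
      case False
      then have ab: "a \<le> b" using h by auto
      have "cnt n s a \<le> cnt n s b" "cnt n s b \<le> cnt n s (Suc b)" using cnt_mono ab by auto
      then have e1: "cnt n s b = cnt n s (Suc b)" "cnt n s a = cnt n s b" using h by auto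
      then have "s (Suc b) \<noteq> 0" using cnt_Suc[of b n s] h by (auto split: if_splits)
      moreover have "Suc b \<in> {1..n}" using h by auto
      ultimately have "s (Suc b) = 1" using s01 by metis
      then have "(ytop b, ytop (Suc b)) \<in> RR" using ytop_step h by auto
      moreover have "(ytop a, ytop b) \<in> RR" using Suc.IH ab h e1 by auto
      ultimately show ?thesis by (meson rtrancl_trans)
    qed
  qed
qed

lemma ytop_conn: "a \<le> b \<Longrightarrow> b \<le> n \<Longrightarrow> cnt n s a = cnt n s b \<Longrightarrow> (ytop a, ytop b) \<in> RR"
  using ytop_conn_aux by blast

lemma lab_ytop: "lab n s (ytop t) = cnt n s t"
  by (simp add: ytop_def lab_def)

lemma vert_ytop: "v \<in> twist_vertices n \<Longrightarrow> \<exists>t \<le> n. (v, ytop t) \<in> RR"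
proof -
  assume "v \<in> twist_vertices n"
  then obtain j c where v: "v = (j, c)" "1 \<le> j" "j \<le> n" by (auto simp: twist_vertices_def)
  have nw: "((j, NW), ytop (j - 1)) \<in> RR" using NW_ytop v by simp
  have sw: "((j, SW), (j, NW)) \<in> RR" using NW_SW[of j] v RR_sym by simp
  have se: "((j, SE), (j, NE)) \<in> RR" using NE_SE[of j] v RR_sym by simp
  have ne: "ytop j = (j, NE)" using v by (simp add: ytop_def)
  have jl: "j - 1 \<le> n" using v by simp
  show ?thesis
  proof (cases c)
    case NW then show ?thesis using v nw jl by blast
  next
    case SW
    have "((j, SW), ytop (j - 1)) \<in> RR" using sw nw by (rule rtrancl_trans)
    then show ?thesis using v jl SW by blast
  next
    case NE then show ?thesis using v ne by (intro exI[of _ j]) simp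
  next
    case SE then show ?thesis using v ne se by (intro exI[of _ j]) simp
  qed
qed

lemma conn_iff: "u \<in> twist_vertices n \<Longrightarrow> v \<in> twist_vertices n \<Longrightarrow>
   (u, v) \<in> RR \<longleftrightarrow> lab n s u = lab n s v"
proof
  assume "(u, v) \<in> RR" then show "lab n s u = lab n s v" by (rule lab_RR)
next
  assume u: "u \<in> twist_vertices n" and v: "v \<in> twist_vertices n" and l: "lab n s u = lab n s v"
  obtain a where a: "a \<le> n" "(u, ytop a) \<in> RR" using vert_ytop u by blast
  obtain b where b: "b \<le> n" "(v, ytop b) \<in> RR" using vert_ytop v by blast
  have "lab n s u = cnt n s a" using lab_RR[OF a(2)] lab_ytop by simp
  moreover have "lab n s v = cnt n s b" using lab_RR[OF b(2)] lab_ytop by simp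
  ultimately have c: "cnt n s a = cnt n s b" using l by simp
  have "(ytop a, ytop b) \<in> RR"
  proof (cases "a \<le> b")
    case True then show ?thesis using ytop_conn c b by simp
  next
    case False then show ?thesis using ytop_conn[of b a] c a RR_sym by simp
  qed
  moreover have "(ytop b, v) \<in> RR" using b RR_sym by simp
  ultimately show "(u, v) \<in> RR" using a by (meson rtrancl_trans)
qed

lemma lab_image: "lab n s ` twist_vertices n = {0..cnt n s n}"
proof
  show "lab n s ` twist_vertices n \<subseteq> {0..cnt n s n}"
    unfolding lab_def by (auto split: corner.splits intro: cnt_le)
next
  have "{0..cnt n s n} \<subseteq> cnt n s ` {0..n}" by (rule cnt_ivt) simp
  also have "\<dots> \<subseteq> lab n s ` twist_vertices n"
  proof
    fix x assume "x \<in> cnt n s ` {0..n}"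
    then obtain t where t: "t \<le> n" "x = cnt n s t" by auto
    have "ytop t \<in> twist_vertices n" using t n1 by (auto simp: ytop_def twist_vertices_def)
    then show "x \<in> lab n s ` twist_vertices n" using t lab_ytop by (metis image_eqI)
  qed
  finally show "{0..cnt n s n} \<subseteq> lab n s ` twist_vertices n" .
qed

lemma card_kernel:
  assumes "\<forall>u\<in>V. \<forall>v\<in>V. F u = F v \<longleftrightarrow> h u = h v"
  shows "card (F ` V) = card (h ` V)"
proof -
  define g where "g K = h (SOME v. v \<in> V \<and> F v = K)" for K
  have g: "g (F v) = h v" if "v \<in> V" for v
  proof -
    have "(SOME u. u \<in> V \<and> F u = F v) \<in> V \<and> F (SOME u. u \<in> V \<and> F u = F v) = F v"
      by (rule someI[of _ v]) (use that in auto)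
    then show ?thesis unfolding g_def using assms that by blast
  qed
  have "inj_on g (F ` V)"
    by (auto simp: inj_on_def g assms)
  moreover have "g ` (F ` V) = h ` V" by (force simp: g image_image)
  ultimately show ?thesis by (metis card_image)
qed

lemma num_curves_eq: "num_curves n s = cnt n s n + 1"
proof -
  have "{RR `` {v} | v. v \<in> twist_vertices n} = (\<lambda>v. RR `` {v}) ` twist_vertices n" by auto
  moreover have kk: "\<forall>u\<in>twist_vertices n. \<forall>v\<in>twist_vertices n.
      RR `` {u} = RR `` {v} \<longleftrightarrow> lab n s u = lab n s v"
  proof (intro ballI)
    fix u v assume u: "u \<in> twist_vertices n" and v: "v \<in> twist_vertices n"
    have "RR `` {u} = RR `` {v} \<longleftrightarrow> (u, v) \<in> RR"
    proof
      assume "RR `` {u} = RR `` {v}"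
      then have "v \<in> RR `` {u}" by auto
      then show "(u, v) \<in> RR" by auto
    next
      assume uv: "(u, v) \<in> RR"
      have vu: "(v, u) \<in> RR" using RR_sym uv .
      show "RR `` {u} = RR `` {v}"
      proof (intro set_eqI iffI)
        fix x assume "x \<in> RR `` {u}"
        then have "(u, x) \<in> RR" by simp
        then show "x \<in> RR `` {v}" using vu by (simp add: rtrancl_trans)
      next
        fix x assume "x \<in> RR `` {v}"
        then have "(v, x) \<in> RR" by simp
        then show "x \<in> RR `` {u}" using uv by (simp add: rtrancl_trans)
      qed
    qed
    then show "RR `` {u} = RR `` {v} \<longleftrightarrow> lab n s u = lab n s v" using conn_iff u v by simp
  qed
  note ck = card_kernel[OF kk]
  ultimately show ?thesis unfolding num_curves_def Let_def
    using lab_image by simp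
qed

end


lemma nth_T: "i < n \<Longrightarrow> k < n \<Longrightarrow>
  (replicate k (1::nat) @ [0] @ replicate (n - k - 1) 1) ! i = (if i = k then 0 else 1)"
  by (auto simp: nth_append)

lemma T_char:
  assumes n: "n \<ge> 1" and len: "length w = n" and w01: "set w \<subseteq> {0, 1}"
  shows "w \<in> T_set n \<longleftrightarrow> card {k. k < n \<and> w ! k = 0} = 1"
proof
  assume "w \<in> T_set n"
  then obtain k where k: "k \<le> n - 1" "w = replicate k 1 @ [0] @ replicate (n - k - 1) 1"
    unfolding T_set_def by auto
  have "k < n" using k n by auto
  then have "{k'. k' < n \<and> w ! k' = 0} = {k}" using k(2) nth_T by (auto split: if_splits)
  then show "card {k. k < n \<and> w ! k = 0} = 1" by simp
next
  assume "card {k. k < n \<and> w ! k = 0} = 1"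
  then obtain k where k: "{k'. k' < n \<and> w ! k' = 0} = {k}" by (rule card_1_singletonE)
  then have kn: "k < n" by auto
  have "w = replicate k 1 @ [0] @ replicate (n - k - 1) 1"
  proof (rule nth_equalityI)
    show "length w = length (replicate k 1 @ [0] @ replicate (n - k - 1) (1::nat))"
      using len kn by simp
  next
    fix i assume "i < length w"
    then have i: "i < n" using len by simp
    have "w ! i \<in> {0, 1}" using w01 i len nth_mem by blast
    moreover have "w ! i = 0 \<longleftrightarrow> i = k" using k i by auto
    ultimately have "w ! i = (if i = k then 0 else 1)" by auto
    then show "w ! i = (replicate k 1 @ [0] @ replicate (n - k - 1) 1) ! i"
      using nth_T[OF i kn] by simp
  qed
  then show "w \<in> T_set n" unfolding T_set_def using kn by auto
qed

lemma T_props: "w \<in> T_set n \<Longrightarrow> n \<ge> 1 \<Longrightarrow> length w = n \<and> set w \<subseteq> {0, 1}"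
  unfolding T_set_def by auto

lemma cnt_word:
  assumes p: "p permutes {1..n}" and len: "length w = n"
  shows "cnt n (word_state p w) n = card {k. k < n \<and> w ! k = 0}"
proof -
  have bij: "bij_betw p {1..n} {1..n}" using p by (rule permutes_imp_bij)
  have "{i \<in> {1..n}. i \<le> n \<and> word_state p w i = 0} = {i \<in> {1..n}. w ! (p i - 1) = 0}"
    unfolding word_state_def by auto
  then have "cnt n (word_state p w) n = card {i \<in> {1..n}. w ! (p i - 1) = 0}"
    unfolding cnt_def by simp
  also have "\<dots> = card (p ` {i \<in> {1..n}. w ! (p i - 1) = 0})"
  proof (rule card_image[symmetric])
    show "inj_on p {i \<in> {1..n}. w ! (p i - 1) = 0}"
      using bij_betw_imp_inj_on[OF bij] by (rule inj_on_subset) auto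
  qed
  also have "p ` {i \<in> {1..n}. w ! (p i - 1) = 0} = {m \<in> {1..n}. w ! (m - 1) = 0}"
  proof (intro set_eqI iffI)
    fix m assume "m \<in> p ` {i \<in> {1..n}. w ! (p i - 1) = 0}"
    then obtain i where i: "i \<in> {1..n}" "w ! (p i - 1) = 0" "m = p i" by auto
    have "p i \<in> {1..n}" using bij_betwE[OF bij] i(1) by blast
    then show "m \<in> {m \<in> {1..n}. w ! (m - 1) = 0}" using i by simp
  next
    fix m assume m: "m \<in> {m \<in> {1..n}. w ! (m - 1) = 0}"
    then have "m \<in> p ` {1..n}" using bij_betw_imp_surj_on[OF bij] by simp
    then obtain i where "i \<in> {1..n}" "p i = m" by (auto simp del: atLeastAtMost_iff)
    then show "m \<in> p ` {i \<in> {1..n}. w ! (p i - 1) = 0}" using m by auto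
  qed
  also have "\<dots> = Suc ` {k. k < n \<and> w ! k = 0}"
  proof (intro set_eqI iffI)
    fix m assume "m \<in> {m \<in> {1..n}. w ! (m - 1) = 0}"
    then have "m - 1 < n" "w ! (m - 1) = 0" "m = Suc (m - 1)" by auto
    then show "m \<in> Suc ` {k. k < n \<and> w ! k = 0}" by (metis (mono_tags, lifting) image_eqI mem_Collect_eq)
  next
    fix m assume "m \<in> Suc ` {k. k < n \<and> w ! k = 0}"
    then show "m \<in> {m \<in> {1..n}. w ! (m - 1) = 0}" by auto
  qed
  also have "card \<dots> = card {k. k < n \<and> w ! k = 0}" by (simp add: card_image)
  finally show ?thesis .
qed

theorem proposition21:
  fixes n :: nat and p :: "nat \<Rightarrow> nat"
  assumes "n \<ge> 2" and "p permutes {1..n}"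
  shows "{w :: nat list. length w = n \<and> set w \<subseteq> {0, 1}
            \<and> num_curves n (word_state p w) = 2} = T_set n"
proof (intro set_eqI iffI)
  have n1: "n \<ge> 1" using assms by simp
  {
    fix w :: "nat list" assume len: "length w = n" and w01: "set w \<subseteq> {0, 1}"
    have s01: "\<forall>j\<in>{1..n}. word_state p w j = 0 \<or> word_state p w j = 1"
    proof
      fix j assume j: "j \<in> {1..n}"
      then have "p j \<in> {1..n}" using permutes_in_image[OF assms(2)] by blast
      then have "p j - 1 < length w" using len by auto
      then have "w ! (p j - 1) \<in> {0, 1}" using w01 nth_mem by blast
      then show "word_state p w j = 0 \<or> word_state p w j = 1" by (auto simp: word_state_def)
    qed
    have "num_curves n (word_state p w) = card {k. k < n \<and> w ! k = 0} + 1"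
      using num_curves_eq[OF n1 s01] cnt_word[OF assms(2) len] by simp
    then have "num_curves n (word_state p w) = 2 \<longleftrightarrow> w \<in> T_set n"
      using T_char[OF n1 len w01] by simp
  } note key = this
  fix w
  show "w \<in> {w. length w = n \<and> set w \<subseteq> {0, 1} \<and> num_curves n (word_state p w) = 2} \<Longrightarrow> w \<in> T_set n"
    using key by auto
  show "w \<in> T_set n \<Longrightarrow> w \<in> {w. length w = n \<and> set w \<subseteq> {0, 1} \<and> num_curves n (word_state p w) = 2}"
    using key T_props n1 by auto
qed

end
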